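(* Let $X,Y\in M_2(\mathbb C)$ be traceless, and put $D_X=\det X$, $D_Y=\det Y$, $T=\frac12\operatorname{tr}(XY)$. (a) For every $t\in\mathbb R$, \[\det\big((1-t)\mathrm{Id}_2+t\exp(X)\exp(Y)\big)=1+2t(1-t)\big(\operatorname{Sin}(D_X)\operatorname{Sin}(D_Y)T+\operatorname{Cos}(D_X)\operatorname{Cos}(D_Y)-1\big)=:\delta(t).\] (b) If $\exp(X)\exp(Y)$ has no eigenvalue in $(-\infty,0]$, then, with $\log$ the principal logarithm, \[\log(\exp X\exp Y)=\operatorname{AC}\big(\operatorname{Cos}(D_X)\operatorname{Cos}(D_Y)+\operatorname{Sin}(D_X)\operatorname{Sin}(D_Y)T\big)\cdot C=\Big(\int_0^1\frac{\mathrm dt}{\delta(t)}\Big)\cdot C,\] where $C=\operatorname{Cos}(D_Y)\operatorname{Sin}(D_X)X+\operatorname{Cos}(D_X)\operatorname{Sin}(D_Y)Y+\frac12\operatorname{Sin}(D_X)\operatorname{Sin}(D_Y)[X,Y]$.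
   Context: $\operatorname{Cos}(z)=\sum_{n\ge0}(-1)^n\frac{z^n}{(2n)!}$, $\operatorname{Sin}(z)=\sum_{n\ge0}(-1)^n\frac{z^n}{(2n+1)!}$ (entire functions). $\operatorname{AC}$ is the analytic function on $\mathbb C\setminus(-\infty,-1]$ defined by $\operatorname{AC}(z)=\int_0^1\frac{\mathrm dt}{1+2t(1-t)(z-1)}$; on the reals $\operatorname{AC}(x)=\frac{\arccos x}{\sqrt{1-x^2}}$ for $-1<x<1$, $\operatorname{AC}(1)=1$, $\operatorname{AC}(x)=\frac{\operatorname{arcosh}x}{\sqrt{x^2-1}}$ for $x>1$. *)

theory Defs
  imports "HOL-Analysis.Analysis"
begin

type_synonym cmat2 = "complex^2^2"

definition msc :: "complex \<Rightarrow> cmat2 \<Rightarrow> cmat2" where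
  "msc c A = (\<chi> i j. c * A $ i $ j)"

fun mpow :: "cmat2 \<Rightarrow> nat \<Rightarrow> cmat2" where
  "mpow A 0 = mat 1"
| "mpow A (Suc n) = A ** mpow A n"

definition mexp :: "cmat2 \<Rightarrow> cmat2" where
  "mexp A = (\<Sum>n. msc (of_real (1 / fact n)) (mpow A n))"

definition is_eigenvalue :: "cmat2 \<Rightarrow> complex \<Rightarrow> bool" where
  "is_eigenvalue A c \<longleftrightarrow> (\<exists>v. v \<noteq> 0 \<and> A *v v = c *s v)"

definition mlog :: "cmat2 \<Rightarrow> cmat2" where
  "mlog M = (THE L. mexp L = M \<and>
      (\<forall>c. is_eigenvalue L c \<longrightarrow> - pi < Im c \<and> Im c < pi))"

definition Cos :: "complex \<Rightarrow> complex" where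
  "Cos z = (\<Sum>n. (-1)^n * z^n / of_nat (fact (2*n)))"

definition Sin :: "complex \<Rightarrow> complex" where
  "Sin z = (\<Sum>n. (-1)^n * z^n / of_nat (fact (2*n+1)))"

definition AC :: "complex \<Rightarrow> complex" where
  "AC z = integral {0..1::real} (\<lambda>t. 1 / (1 + 2 * of_real t * (1 - of_real t) * (z - 1)))"

end

theory Submission
  imports Defs
begin

lemma msc_nth[simp]: "msc c A $ i $ j = c * A $ i $ j"
  by (simp add: msc_def)

lemma mat1_nth: "(mat 1 :: cmat2) $ i $ j = (if i = j then 1 else 0)"
  by (simp add: mat_def)

lemma mm_nth: "((A::cmat2) ** B) $ i $ j = A$i$1 * B$1$j + A$i$2 * B$2$j"
  by (simp add: matrix_matrix_mult_def sum_2)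

lemma mat2_eqI:
  fixes A B :: cmat2
  assumes "A$1$1 = B$1$1" "A$1$2 = B$1$2" "A$2$1 = B$2$1" "A$2$2 = B$2$2"
  shows "A = B"
  using assms by (simp add: vec_eq_iff forall_2)

lemma tr2: "trace (A::cmat2) = A$1$1 + A$2$2"
  by (simp add: trace_def sum_2)

lemmas ent = mat1_nth mm_nth det_2 tr2



definition aa :: "complex \<Rightarrow> complex \<Rightarrow> nat \<Rightarrow> complex" where
  "aa s r n = ((s+r)^n + (s-r)^n)/2"
definition bb :: "complex \<Rightarrow> complex \<Rightarrow> nat \<Rightarrow> complex" where
  "bb s r n = (if r = 0 then of_nat n * s^(n-1) else ((s+r)^n - (s-r)^n)/(2*r))"

lemma aa_Suc: "aa s r (Suc n) = s * aa s r n + r^2 * bb s r n"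
  by (auto simp: aa_def bb_def field_simps power2_eq_square)

lemma bb_Suc: "bb s r (Suc n) = aa s r n + s * bb s r n"
proof (cases "r = 0")
  case True then show ?thesis by (cases n) (auto simp: aa_def bb_def algebra_simps)
next
  case False then show ?thesis by (auto simp: aa_def bb_def field_simps)
qed

lemma mpow_formula:
  fixes L :: cmat2
  assumes s: "s = trace L / 2" and r: "r^2 = s^2 - det L"
  shows "mpow L n = msc (aa s r n) (mat 1) + msc (bb s r n) (L - msc s (mat 1))"
proof (induction n)
  case 0 show ?case by (rule mat2_eqI) (simp_all add: aa_def bb_def ent)
next
  case (Suc n)
  have s': "s = (L$1$1 + L$2$2)/2" using s by (simp add: ent)
  have r': "r^2 = s^2 - (L$1$1 * L$2$2 - L$1$2 * L$2$1)" using r by (simp add: ent)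
  show ?case unfolding mpow.simps Suc aa_Suc bb_Suc
    by (rule mat2_eqI; simp add: ent; insert s' r'; simp add: field_simps power2_eq_square; algebra)
qed


lemma exp_sums': "(\<lambda>n. of_real (1/fact n) * x^n) sums exp (x::complex)"
  using exp_converges[of x] by (simp add: scaleR_conv_of_real divide_inverse mult.commute)

lemma aa_sums: "(\<lambda>n. of_real (1/fact n) * aa s r n) sums ((exp(s+r) + exp(s-r))/2)"
proof -
  have "(\<lambda>n. (of_real (1/fact n) * (s+r)^n + of_real (1/fact n) * (s-r)^n)/2) sums ((exp(s+r) + exp(s-r))/2)"
    by (intro sums_divide sums_add exp_sums')
  then show ?thesis by (simp add: aa_def algebra_simps add_divide_distrib)
qed

definition bexp :: "complex \<Rightarrow> complex \<Rightarrow> complex" where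
  "bexp s r = (if r = 0 then exp s else (exp(s+r) - exp(s-r))/(2*r))"

lemma bb_sums: "(\<lambda>n. of_real (1/fact n) * bb s r n) sums bexp s r"
proof (cases "r = 0")
  case False
  have "(\<lambda>n. (of_real (1/fact n) * (s+r)^n - of_real (1/fact n) * (s-r)^n)/(2*r)) sums ((exp(s+r) - exp(s-r))/(2*r))"
    by (intro sums_divide sums_diff exp_sums')
  then show ?thesis using False by (simp add: bb_def bexp_def algebra_simps diff_divide_distrib)
next
  case True
  have "(\<lambda>n. of_real (1/fact (Suc n)) * bb s r (Suc n)) sums exp s"
  proof -
    have "of_real (1/fact (Suc n)) * bb s r (Suc n) = of_real (1/fact n) * s^n" for n
    proof -
      have "(of_real (1/fact (Suc n)) :: complex) * of_nat (Suc n) = of_real (1/fact n)"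
        by (simp add: fact_Suc divide_simps del: of_nat_Suc)
      then show ?thesis using True by (simp add: bb_def mult.assoc[symmetric] del: of_nat_Suc)
    qed
    then show ?thesis using exp_sums'[of s] by simp
  qed
  then have "(\<lambda>n. of_real (1/fact n) * bb s r n) sums (exp s + of_real (1/fact 0) * bb s r 0)"
    by (rule iffD1[OF sums_Suc_iff[where f="\<lambda>n. of_real (1/fact n) * bb s r n"]])
  then show ?thesis using True by (simp add: bexp_def bb_def)
qed

lemma mexp_formula:
  fixes L :: cmat2
  assumes s: "s = trace L / 2" and r: "r^2 = s^2 - det L"
  shows "mexp L = msc ((exp(s+r) + exp(s-r))/2) (mat 1) + msc (bexp s r) (L - msc s (mat 1))"
proof -
  let ?A = "(exp(s+r) + exp(s-r))/2" and ?B = "bexp s r" and ?L0 = "L - msc s (mat 1)"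
  have "(\<lambda>n. msc (of_real (1 / fact n)) (mpow L n)) sums (msc ?A (mat 1) + msc ?B ?L0)"
    unfolding sums_def
  proof (rule vec_tendstoI, rule vec_tendstoI)
    fix i j
    have "(\<lambda>n. of_real (1/fact n) * aa s r n * mat 1 $ i $ j + of_real (1/fact n) * bb s r n * ?L0 $ i $ j)
          sums (?A * mat 1 $ i $ j + ?B * ?L0 $ i $ j)"
      by (intro sums_add sums_mult2 aa_sums bb_sums)
    then show "((\<lambda>x. (\<Sum>n<x. msc (of_real (1 / fact n)) (mpow L n)) $ i $ j) \<longlonglongrightarrow>
          (msc ?A (mat 1) + msc ?B ?L0) $ i $ j)"
      unfolding sums_def mpow_formula[OF s r] by (simp add: algebra_simps)
  qed
  then show ?thesis unfolding mexp_def by (rule sums_unique[symmetric])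
qed


lemma group2: "sum f {(n::nat)*2..<n*2+2} = f (2*n) + f (2*n+1)"
proof -
  have "{n*2..<n*2+2} = {2*n, 2*n+1}" by auto
  then show ?thesis by simp
qed

lemma aa_even: "aa 0 r (2*n) = (r^2)^n" and aa_odd: "aa 0 r (2*n+1) = 0"
  by (simp_all add: aa_def power_mult power_minus')

lemma bb_even: "bb 0 r (2*n) = 0"
  by (cases n) (simp_all add: bb_def power_mult)

lemma bb_odd: "bb 0 r (2*n+1) = (r^2)^n"
proof (cases "r = 0")
  case True then show ?thesis by (cases n) (simp_all add: bb_def)
next
  case False
  have "(-r)^(2*n+1) = - (r * (r^2)^n)" by (simp add: power_mult power_minus')
  moreover have "r^(2*n+1) = r * (r^2)^n" by (simp add: power_mult)
  ultimately show ?thesis using False by (simp add: bb_def)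
qed

lemma Cos_eq: assumes "r^2 = -D" shows "Cos D = (exp r + exp (-r))/2"
proof -
  have "(\<lambda>n. sum (\<lambda>n. of_real (1/fact n) * aa 0 r n) {n*2..<n*2+2}) sums ((exp r + exp (-r))/2)"
    using sums_group[OF aa_sums[of 0 r], of 2] by simp
  then have "(\<lambda>n. (-1)^n * D^n / of_nat (fact (2*n))) sums ((exp r + exp (-r))/2)"
  proof -
    have "of_real (1/fact (2*n)) * aa 0 r (2*n) + of_real (1/fact (2*n+1)) * aa 0 r (2*n+1)
       = (-1)^n * D^n / of_nat (fact (2*n))" for n
      unfolding aa_even aa_odd assms power_minus[of D n] by (simp add: of_real_divide)
    then show ?thesis using \<open>(\<lambda>n. _) sums _\<close> by (simp only: group2)
  qed
  then show ?thesis unfolding Cos_def by (rule sums_unique[symmetric])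
qed

lemma Sin_eq: assumes "r^2 = -D" shows "Sin D = bexp 0 r"
proof -
  have "(\<lambda>n. sum (\<lambda>n. of_real (1/fact n) * bb 0 r n) {n*2..<n*2+2}) sums bexp 0 r"
    by (rule sums_group[OF bb_sums]) simp
  then have "(\<lambda>n. (-1)^n * D^n / of_nat (fact (2*n+1))) sums bexp 0 r"
  proof -
    have "of_real (1/fact (2*n)) * bb 0 r (2*n) + of_real (1/fact (2*n+1)) * bb 0 r (2*n+1)
       = (-1)^n * D^n / of_nat (fact (2*n+1))" for n
      unfolding bb_even bb_odd assms power_minus[of D n] by (simp add: of_real_divide del: fact_Suc)
    then show ?thesis using \<open>(\<lambda>n. _) sums _\<close> by (simp only: group2)
  qed
  then show ?thesis unfolding Sin_def by (rule sums_unique[symmetric])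
qed

lemma mexp_traceless:
  fixes X :: cmat2
  assumes "trace X = 0"
  shows "mexp X = msc (Cos (det X)) (mat 1) + msc (Sin (det X)) X"
proof -
  let ?r = "csqrt (- det X)"
  have r: "?r^2 = 0^2 - det X" by simp
  have "mexp X = msc ((exp(0+?r) + exp(0-?r))/2) (mat 1) + msc (bexp 0 ?r) (X - msc 0 (mat 1))"
    by (rule mexp_formula[OF _ r]) (simp add: assms)
  moreover have "Cos (det X) = (exp ?r + exp (-?r))/2" by (rule Cos_eq) simp
  moreover have "Sin (det X) = bexp 0 ?r" by (rule Sin_eq) simp
  moreover have "X - msc 0 (mat 1) = X" by (rule mat2_eqI) simp_all
  ultimately show ?thesis by (simp only: add_0_left diff_0)
qed

lemma seg_notin:
  fixes l :: complex and t :: real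
  assumes l: "l \<notin> \<real>\<^sub>\<le>\<^sub>0" and t: "0 \<le> t" "t \<le> 1"
  shows "1 + of_real t * (l - 1) \<notin> \<real>\<^sub>\<le>\<^sub>0"
proof
  assume "1 + of_real t * (l - 1) \<in> \<real>\<^sub>\<le>\<^sub>0"
  then have re: "1 + t * (Re l - 1) \<le> 0" and im: "t * Im l = 0"
    by (auto simp: complex_nonpos_Reals_iff)
  show False
  proof (cases "t = 0")
    case True then show False using re by simp
  next
    case False
    then have "Im l = 0" using im by simp
    then have "Re l > 0" using l by (auto simp: complex_nonpos_Reals_iff)
    then have "t * Re l > 0" using False t by simp
    then show False using re t by (simp add: algebra_simps)
  qed
qed

lemma AC_one: "AC 1 = 1"
  unfolding AC_def by simp

lemma AC_lambda:
  fixes l :: complex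
  assumes l: "l \<notin> \<real>\<^sub>\<le>\<^sub>0"
  shows "AC ((l + 1/l)/2) * (l - 1/l) = 2 * Ln l"
proof -
  have l0: "l \<noteq> 0" using l by auto
  have li: "1/l \<notin> \<real>\<^sub>\<le>\<^sub>0" using l by (simp add: divide_inverse)
  define g1 where "g1 z = 1 + z * (l - 1)" for z :: complex
  define g2 where "g2 z = 1 + z * (1/l - 1)" for z :: complex
  define H where "H z = Ln (g1 z) - Ln (g2 z)" for z
  have fac: "1 + 2 * z * (1 - z) * ((l + 1/l)/2 - 1) = g1 z * g2 z" for z
    using l0 by (simp add: g1_def g2_def field_simps)
  have g1n: "g1 (of_real t) \<notin> \<real>\<^sub>\<le>\<^sub>0" and g2n: "g2 (of_real t) \<notin> \<real>\<^sub>\<le>\<^sub>0" if "t \<in> {0..1}" for t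
    using seg_notin[OF l, of t] seg_notin[OF li, of t] that by (auto simp: g1_def g2_def)
  have der: "((\<lambda>t. H (of_real t)) has_vector_derivative (l - 1/l) / (g1 (of_real t) * g2 (of_real t)))
             (at t within {0..1})" if t: "t \<in> {0..1}" for t
  proof (rule has_vector_derivative_real_field)
    have n1: "g1 (of_real t) \<noteq> 0" and n2: "g2 (of_real t) \<noteq> 0"
      using g1n[OF t] g2n[OF t] by auto
    have "(H has_field_derivative (inverse (g1 (of_real t)) * (l - 1) - inverse (g2 (of_real t)) * (1/l - 1)))
          (at (of_real t))"
    proof -
      have d1: "((\<lambda>z. Ln (g1 z)) has_field_derivative inverse (g1 (of_real t)) * (l - 1)) (at (of_real t))"
      proof (rule has_field_derivative_Ln[THEN DERIV_chain2])
        show "g1 (of_real t) \<notin> \<real>\<^sub>\<le>\<^sub>0" by (rule g1n[OF t])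
        show "(g1 has_field_derivative l - 1) (at (of_real t))"
          unfolding g1_def[abs_def] by (auto intro!: derivative_eq_intros)
      qed
      have d2: "((\<lambda>z. Ln (g2 z)) has_field_derivative inverse (g2 (of_real t)) * (1/l - 1)) (at (of_real t))"
      proof (rule has_field_derivative_Ln[THEN DERIV_chain2])
        show "g2 (of_real t) \<notin> \<real>\<^sub>\<le>\<^sub>0" by (rule g2n[OF t])
        show "(g2 has_field_derivative 1/l - 1) (at (of_real t))"
          unfolding g2_def[abs_def] by (auto intro!: derivative_eq_intros)
      qed
      show ?thesis unfolding H_def[abs_def] by (rule DERIV_diff[OF d1 d2])
    qed
    moreover have "inverse (g1 (of_real t)) * (l - 1) - inverse (g2 (of_real t)) * (1/l - 1)
        = (l - 1/l) / (g1 (of_real t) * g2 (of_real t))"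
    proof -
      have key: "(l - 1) * g2 (of_real t) - (1/l - 1) * g1 (of_real t) = l - 1/l"
        using l0 by (simp add: g1_def g2_def field_simps)
      have "inverse (g1 (of_real t)) * (l - 1) - inverse (g2 (of_real t)) * (1/l - 1)
         = ((l - 1) * g2 (of_real t) - (1/l - 1) * g1 (of_real t)) / (g1 (of_real t) * g2 (of_real t))"
        using n1 n2 by (simp add: field_simps)
      then show ?thesis using key by simp
    qed
    ultimately show "(H has_field_derivative (l - 1/l) / (g1 (of_real t) * g2 (of_real t))) (at (of_real t))"
      by simp
  qed
  have int: "((\<lambda>t. (l - 1/l) / (g1 (of_real t) * g2 (of_real t))) has_integral (2 * Ln l)) {0..1}"
  proof -
    have "((\<lambda>t. (l - 1/l) / (g1 (of_real t) * g2 (of_real t))) has_integral (H (of_real 1) - H (of_real 0))) {0..1}"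
      by (rule fundamental_theorem_of_calculus) (use der in auto)
    moreover have "H (of_real 1) - H (of_real 0) = 2 * Ln l"
      using Ln_inverse[OF l] by (simp add: H_def g1_def g2_def divide_inverse)
    ultimately show ?thesis by simp
  qed
  show ?thesis
  proof (cases "l - 1/l = 0")
    case True
    then have "l * l = 1" using l0 by (simp add: field_simps)
    then have "l = 1 \<or> l = -1" by (metis mult_cancel_left square_eq_1_iff power2_eq_square)
    moreover have "l \<noteq> -1" using l by auto
    ultimately show ?thesis by simp
  next
    case False
    have "((\<lambda>t. 1 / (1 + 2 * of_real t * (1 - of_real t) * ((l + 1/l)/2 - 1))) has_integral (2 * Ln l / (l - 1/l))) {0..1}"
      using has_integral_mult_right[OF int, of "1/(l - 1/l)"] False unfolding fac by simp
    then have "AC ((l + 1/l)/2) = 2 * Ln l / (l - 1/l)"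
      unfolding AC_def by (rule integral_unique)
    then show ?thesis using False by simp
  qed
qed

lemma eigI:
  fixes M :: cmat2
  assumes "x \<noteq> 0 \<or> y \<noteq> 0" "M$1$1*x + M$1$2*y = c*x" "M$2$1*x + M$2$2*y = c*y"
  shows "is_eigenvalue M c"
  unfolding is_eigenvalue_def
proof (intro exI conjI)
  let ?v = "(\<chi> i. if i = 1 then x else y) :: complex^2"
  show "?v \<noteq> 0" using assms(1) by (auto simp: vec_eq_iff forall_2)
  show "M *v ?v = c *s ?v" using assms(2,3)
    by (simp add: vec_eq_iff forall_2 matrix_vector_mult_def sum_2)
qed

lemma eigD:
  fixes M :: cmat2
  assumes "is_eigenvalue M c"
  obtains x y where "x \<noteq> 0 \<or> y \<noteq> 0" "M$1$1*x + M$1$2*y = c*x" "M$2$1*x + M$2$2*y = c*y"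
proof -
  obtain v where v: "v \<noteq> 0" "M *v v = c *s v" using assms unfolding is_eigenvalue_def by blast
  have "v$1 \<noteq> 0 \<or> v$2 \<noteq> 0" using v(1) by (auto simp: vec_eq_iff forall_2)
  moreover have "(M *v v)$1 = (c *s v)$1" "(M *v v)$2 = (c *s v)$2" using v(2) by simp_all
  ultimately show ?thesis using that
    by (simp add: matrix_vector_mult_def sum_2)
qed

lemma eig_char:
  fixes L :: cmat2
  assumes "is_eigenvalue L c"
  shows "c^2 - trace L * c + det L = 0"
proof -
  obtain x y where xy: "x \<noteq> 0 \<or> y \<noteq> 0" "L$1$1*x + L$1$2*y = c*x" "L$2$1*x + L$2$2*y = c*y"
    using eigD[OF assms] by blast
  let ?p = "c^2 - trace L * c + det L"
  have "?p * x = 0" using xy(2,3) unfolding ent power2_eq_square by algebra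
  moreover have "?p * y = 0" using xy(2,3) unfolding ent power2_eq_square by algebra
  ultimately show ?thesis using xy(1) by auto
qed

lemma char_eig:
  fixes M :: cmat2
  assumes "c^2 - trace M * c + det M = 0"
  shows "is_eigenvalue M c"
proof -
  have ch: "(c - M$1$1) * (c - M$2$2) = M$1$2 * M$2$1"
    using assms by (simp add: ent algebra_simps power2_eq_square)
  show ?thesis
  proof (cases "M$1$2 = 0")
    case False
    show ?thesis
      by (rule eigI[of "M$1$2" "c - M$1$1"]) (use False ch in \<open>auto simp: algebra_simps\<close>)
  next
    case True
    show ?thesis
    proof (cases "c = M$2$2")
      case True2: True
      show ?thesis by (rule eigI[of 0 1]) (use True True2 in auto)
    next
      case False2: False
      then have c1: "c = M$1$1" using ch True by simp
      show ?thesis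
        by (rule eigI[of "c - M$2$2" "M$2$1"]) (use True False2 c1 in \<open>auto simp: algebra_simps\<close>)
    qed
  qed
qed

lemma det_AB:
  fixes L0 :: cmat2
  assumes "trace L0 = 0"
  shows "det (msc A (mat 1) + msc B L0) = A^2 + B^2 * det L0"
proof -
  have "L0$2$2 = - L0$1$1" using assms by (simp add: ent eq_neg_iff_add_eq_0 add.commute)
  then show ?thesis by (simp add: ent power2_eq_square algebra_simps)
qed

lemma AB_id: "((exp(s+r)+exp(s-r))/2)^2 - (bexp s r)^2 * r^2 = exp s * exp s"
proof (cases "r = 0")
  case True then show ?thesis by (simp add: bexp_def power2_eq_square)
next
  case False
  have "(bexp s r)^2 * r^2 = ((exp(s+r) - exp(s-r))/2)^2"
    using False by (simp add: bexp_def power2_eq_square field_simps)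
  moreover have "exp(s+r) * exp(s-r) = exp s * exp s"
    by (simp add: mult_exp_exp)
  moreover have "((x+y)/2)^2 - ((x-y)/2)^2 = x*y" for x y :: complex
    by (simp add: power2_eq_square field_simps)
  ultimately show ?thesis by metis
qed


lemma exp_eq_1_strip:
  fixes r :: complex
  assumes "- pi < Im r" "Im r < pi" "exp r = 1"
  shows "r = 0"
proof -
  obtain n :: int where n: "Re r = 0" "Im r = of_int (2*n) * pi" using assms(3) exp_eq_1 by blast
  have "n = 0"
  proof (rule ccontr)
    assume "n \<noteq> 0"
    then have "\<bar>of_int (2*n)\<bar> \<ge> (2::real)" by linarith
    then have "\<bar>Im r\<bar> \<ge> 2*pi" using n(2) pi_gt_zero by (simp add: abs_mult)
    then show False using assms(1,2) pi_gt_zero by linarith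
  qed
  then show ?thesis using n by (simp add: complex_eq_iff)
qed

lemma AC_bexp:
  fixes r :: complex
  assumes "- pi < Im r" "Im r < pi" "exp r \<notin> \<real>\<^sub>\<le>\<^sub>0"
    and a: "a = (exp r + exp (-r))/2"
  shows "AC a * bexp 0 r = 1"
proof (cases "r = 0")
  case True
  then have "a = 1" using a by simp
  then show ?thesis using True by (simp add: bexp_def AC_one)
next
  case False
  let ?l = "exp r"
  have ln: "Ln ?l = r" by (rule Ln_exp) (use assms(1,2) in auto)
  have em: "exp (-r) = 1/?l" by (metis exp_minus inverse_eq_divide)
  have a': "a = (?l + 1/?l)/2" using a unfolding em .
  have AC: "AC a * (?l - 1/?l) = 2 * r" using AC_lambda[OF assms(3)] unfolding ln a'[symmetric] .
  have "bexp 0 r = (?l - 1/?l)/(2*r)" using False em by (simp add: bexp_def)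
  then have "AC a * bexp 0 r = (AC a * (?l - 1/?l))/(2*r)" by simp
  then show ?thesis using AC False by simp
qed

lemma exp_eq_1_strip2:
  fixes s :: complex
  assumes "- pi < Im s" "Im s < pi" "exp (s + s) = 1"
  shows "s = 0"
proof -
  obtain n :: int where n: "Re (s+s) = 0" "Im (s+s) = of_int (2*n) * pi" using assms(3) exp_eq_1 by blast
  have ims: "Im s = of_int n * pi" using n(2) by simp
  have "n = 0"
  proof (rule ccontr)
    assume "n \<noteq> 0"
    then have "\<bar>of_int n\<bar> \<ge> (1::real)" by linarith
    then have "\<bar>Im s\<bar> \<ge> pi" using ims pi_gt_zero by (simp add: abs_mult)
    then show False using assms(1,2) pi_gt_zero by linarith
  qed
  then show ?thesis using n ims by (simp add: complex_eq_iff)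
qed

lemma root_half:
  fixes l a :: complex
  assumes "l^2 - 2*a*l + 1 = 0" "l \<noteq> 0"
  shows "a = (l + 1/l)/2"
proof -
  have h: "2*a*l = l*l + 1" using assms(1) unfolding power2_eq_square by algebra
  have "a = (2*a*l)/(2*l)" using assms(2) by simp
  also have "\<dots> = (l*l+1)/(2*l)" by (simp only: h)
  also have "\<dots> = (l + 1/l)/2" using assms(2) by (simp add: field_simps)
  finally show ?thesis .
qed

lemma mlog_char:
  fixes M :: cmat2
  assumes dM: "det M = 1" and tM: "trace M = 2*a"
    and eig: "\<forall>c. is_eigenvalue M c \<longrightarrow> c \<notin> \<real>\<^sub>\<le>\<^sub>0"
  shows "mlog M = msc (AC a) (M - msc a (mat 1))"
proof -
  let ?C = "M - msc a (mat 1)"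
  have tM': "M$1$1 + M$2$2 = 2*a" using tM by (simp add: ent)
  have dM': "M$1$1*M$2$2 - M$1$2*M$2$1 = 1" using dM by (simp add: ent)
  have rootM: "x \<notin> \<real>\<^sub>\<le>\<^sub>0" if "x^2 - 2*a*x + 1 = 0" for x
  proof -
    have "is_eigenvalue M x" by (rule char_eig) (use that tM dM in \<open>simp add: mult.commute\<close>)
    then show ?thesis using eig by blast
  qed
  define q where "q = csqrt (a^2 - 1)"
  define l where "l = a + q"
  have qq: "q*q = a*a - 1" unfolding q_def by (metis power2_csqrt power2_eq_square)
  have lroot: "l^2 - 2*a*l + 1 = 0" using qq unfolding l_def power2_eq_square by algebra
  have lnot: "l \<notin> \<real>\<^sub>\<le>\<^sub>0" using rootM lroot by blast
  then have l0: "l \<noteq> 0" by auto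
  define r where "r = Ln l"
  have er: "exp r = l" using l0 by (simp add: r_def)
  have rb: "- pi < Im r" "Im r < pi" using mpi_less_Im_Ln[OF l0] Im_Ln_less_pi[OF lnot] by (simp_all add: r_def)
  have em: "exp (-r) = 1/l" using er by (metis exp_minus inverse_eq_divide)
  have ar: "a = (exp r + exp (-r))/2" using root_half[OF lroot l0] er em by simp
  define \<kappa> where "\<kappa> = AC a"
  define L where "L = msc \<kappa> ?C"
  have B1: "bexp 0 r * \<kappa> = 1" using AC_bexp[OF rb _ ar] lnot er by (simp add: \<kappa>_def mult.commute)
  have ar0: "(exp(0+r) + exp(0-r))/2 = a" using ar by simp
  have AB: "a^2 - (bexp 0 r)^2 * r^2 = 1" using AB_id[of 0 r] unfolding ar0 by simp
  have detC: "det ?C = 1 - a^2"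
  proof -
    have "det ?C = (M$1$1 - a)*(M$2$2 - a) - M$1$2*M$2$1" by (simp add: ent)
    then show ?thesis using tM' dM' unfolding power2_eq_square by algebra
  qed
  have trL: "trace L = 0"
  proof -
    have "trace L = \<kappa> * (M$1$1 + M$2$2 - 2*a)" by (simp add: ent L_def algebra_simps)
    then show ?thesis using tM' by simp
  qed
  have detL: "det L = \<kappa>^2 * det ?C" by (simp add: ent L_def power2_eq_square algebra_simps)
  have rr: "r^2 = 0^2 - det L"
  proof -
    have "det L = - ((bexp 0 r * \<kappa>)^2 * r^2)" using detL detC AB by algebra
    then show ?thesis using B1 by simp
  qed
  have BL: "msc (bexp 0 r) L = ?C"
    by (rule mat2_eqI) (simp_all add: L_def mult.assoc[symmetric] B1)
  have mexpL: "mexp L = M"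
  proof -
    have "mexp L = msc ((exp(0+r) + exp(0-r))/2) (mat 1) + msc (bexp 0 r) (L - msc 0 (mat 1))"
      by (rule mexp_formula[OF _ rr]) (simp add: trL)
    also have "L - msc 0 (mat 1) = L" by (rule mat2_eqI) simp_all
    also have "(exp(0+r) + exp(0-r))/2 = a" using ar by simp
    finally have "mexp L = msc a (mat 1) + ?C" using BL by simp
    then show ?thesis by simp
  qed
  have eigL: "\<forall>c. is_eigenvalue L c \<longrightarrow> - pi < Im c \<and> Im c < pi"
  proof (intro allI impI)
    fix c assume "is_eigenvalue L c"
    then have "c^2 - trace L * c + det L = 0" by (rule eig_char)
    then have "c^2 + det L = 0" using trL by simp
    then have "c^2 = - det L" by (simp add: eq_neg_iff_add_eq_0)
    moreover have "r^2 = - det L" using rr by simp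
    ultimately have "c^2 = r^2" by simp
    then have "c = r \<or> c = -r" by (simp add: power2_eq_iff)
    then show "- pi < Im c \<and> Im c < pi" using rb by auto
  qed
  have uniq: "K = L" if K1: "mexp K = M" and K2: "\<forall>c. is_eigenvalue K c \<longrightarrow> - pi < Im c \<and> Im c < pi" for K
  proof -
    define s where "s = trace K / 2"
    define \<rho> where "\<rho> = csqrt (s^2 - det K)"
    have \<rho>\<rho>: "\<rho>^2 = s^2 - det K" by (simp add: \<rho>_def)
    have tK: "trace K = 2 * s" by (simp add: s_def)
    have ev1: "is_eigenvalue K (s+\<rho>)"
      by (rule char_eig) (use \<rho>\<rho> tK in \<open>simp add: power2_eq_square algebra_simps\<close>)
    have ev2: "is_eigenvalue K (s-\<rho>)"
      by (rule char_eig) (use \<rho>\<rho> tK in \<open>simp add: power2_eq_square algebra_simps\<close>)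
    have b1: "- pi < Im (s+\<rho>)" "Im (s+\<rho>) < pi" and b2: "- pi < Im (s-\<rho>)" "Im (s-\<rho>) < pi"
      using K2 ev1 ev2 by blast+
    have sb: "- pi < Im s" "Im s < pi" using b1 b2 by simp_all
    let ?L0 = "K - msc s (mat 1)"
    have mf: "M = msc ((exp(s+\<rho>) + exp(s-\<rho>))/2) (mat 1) + msc (bexp s \<rho>) ?L0"
      using mexp_formula[OF s_def \<rho>\<rho>] K1 by simp
    have trL0: "trace ?L0 = 0" using tK by (simp add: ent algebra_simps)
    have detL0: "det ?L0 = - (\<rho>^2)"
    proof -
      have "det ?L0 = (K$1$1 - s)*(K$2$2 - s) - K$1$2*K$2$1" by (simp add: ent)
      moreover have "K$1$1 + K$2$2 = 2 * s" using tK by (simp add: ent)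
      moreover have "\<rho>^2 = s^2 - (K$1$1*K$2$2 - K$1$2*K$2$1)" using \<rho>\<rho> by (simp add: ent)
      ultimately show ?thesis unfolding power2_eq_square by algebra
    qed
    have "1 = det M" using dM by simp
    also have "\<dots> = ((exp(s+\<rho>) + exp(s-\<rho>))/2)^2 + (bexp s \<rho>)^2 * det ?L0"
      unfolding mf by (rule det_AB[OF trL0])
    also have "\<dots> = exp s * exp s" using AB_id[of s \<rho>] detL0 by simp
    finally have "exp (s + s) = 1" by (simp add: mult_exp_exp)
    then have s0: "s = 0" using exp_eq_1_strip2 sb by blast
    have L0: "?L0 = K" unfolding s0 by (rule mat2_eqI) simp_all
    have mf0: "M = msc ((exp \<rho> + exp (-\<rho>))/2) (mat 1) + msc (bexp 0 \<rho>) K"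
      using mf unfolding L0 by (simp add: s0)
    have trKz: "trace K = 0" using tK s0 by simp
    have aA: "a = (exp \<rho> + exp (-\<rho>))/2"
    proof -
      have "trace M = exp \<rho> + exp (-\<rho>) + bexp 0 \<rho> * trace K"
        by (subst mf0) (simp add: ent field_simps)
      then have "2 * a = exp \<rho> + exp (-\<rho>)" using tM trKz by simp
      then show ?thesis by (simp add: field_simps)
    qed
    have rb': "- pi < Im \<rho>" "Im \<rho> < pi" using b1 s0 by simp_all
    have eroot: "(exp \<rho>)^2 - 2*a*exp \<rho> + 1 = 0"
    proof -
      have "exp \<rho> * exp (-\<rho>) = 1" by (simp add: exp_minus)
      then show ?thesis unfolding aA power2_eq_square by (simp add: algebra_simps)
    qed
    have enot: "exp \<rho> \<notin> \<real>\<^sub>\<le>\<^sub>0" by (rule rootM[OF eroot])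
    have ACB: "AC a * bexp 0 \<rho> = 1" by (rule AC_bexp[OF rb' enot aA])
    have CB: "?C = msc (bexp 0 \<rho>) K"
      using mf0 aA by (simp add: mat2_eqI)
    show "K = L" unfolding L_def CB \<kappa>_def
      by (rule mat2_eqI) (simp_all add: mult.assoc[symmetric] ACB)
  qed
  have "mlog M = L" unfolding mlog_def
  proof (rule the_equality)
    show "mexp L = M \<and> (\<forall>c. is_eigenvalue L c \<longrightarrow> - pi < Im c \<and> Im c < pi)"
      using mexpL eigL by blast
    show "\<And>K. mexp K = M \<and> (\<forall>c. is_eigenvalue K c \<longrightarrow> - pi < Im c \<and> Im c < pi) \<Longrightarrow> K = L"
      using uniq by blast
  qed
  then show ?thesis by (simp add: L_def \<kappa>_def)
qed

lemma CS_id: "Cos D ^ 2 + Sin D ^ 2 * D = 1"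
proof -
  let ?r = "csqrt (- D)"
  have rr: "?r^2 = - D" by simp
  have "((exp(0+?r)+exp(0-?r))/2)^2 - (bexp 0 ?r)^2 * ?r^2 = exp 0 * exp 0" by (rule AB_id)
  then have h: "((exp ?r+exp (-?r))/2)^2 - (bexp 0 ?r)^2 * (- D) = 1" unfolding rr by simp
  show ?thesis unfolding Cos_eq[OF rr] Sin_eq[OF rr] using h by simp
qed

lemma det_mexp_traceless:
  fixes X :: cmat2
  assumes "trace X = 0"
  shows "det (mexp X) = 1"
  unfolding mexp_traceless[OF assms] det_AB[OF assms] using CS_id[of "det X"] by simp

lemma det_conv:
  fixes M :: cmat2
  assumes "det M = 1" "trace M = 2 * a"
  shows "det (msc (of_real (1 - t)) (mat 1) + msc (of_real t) M) = 1 + 2 * of_real t * (1 - of_real t) * (a - 1)"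
proof -
  have t: "M$1$1 + M$2$2 = 2 * a" using assms(2) by (simp add: ent)
  have d: "M$1$1*M$2$2 - M$1$2*M$2$1 = 1" using assms(1) by (simp add: ent)
  have "det (msc (of_real (1 - t)) (mat 1) + msc (of_real t) M) =
     (of_real (1-t) + of_real t * M$1$1) * (of_real (1-t) + of_real t * M$2$2) - of_real t * M$1$2 * (of_real t * M$2$1)"
    by (simp add: ent)
  moreover have "(1-\<tau> + \<tau>*m11)*(1-\<tau>+\<tau>*m22) - \<tau>*m12*(\<tau>*m21) = 1 + 2*\<tau>*(1-\<tau>)*(a-1)"
    if "m11 + m22 = 2*a" "m11*m22 - m12*m21 = 1" for \<tau> m11 m12 m21 m22 :: complex
    using that by algebra
  ultimately show ?thesis using t d unfolding of_real_diff of_real_1 by simp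
qed

lemma trace_msc: "trace (msc c (A::cmat2)) = c * trace A"
  by (simp add: ent algebra_simps)

lemma prod_form:
  fixes X Y :: cmat2
  assumes "trace X = 0" "trace Y = 0"
  shows "(msc cX (mat 1) + msc sX X) ** (msc cY (mat 1) + msc sY Y) =
    msc (cX * cY + sX * sY * (trace (X ** Y) / 2)) (mat 1) +
    (msc (cY * sX) X + msc (cX * sY) Y + msc (sX * sY / 2) (X ** Y - Y ** X))"
proof -
  have x: "X$2$2 = - X$1$1" using assms(1) by (simp add: ent eq_neg_iff_add_eq_0 add.commute)
  have y: "Y$2$2 = - Y$1$1" using assms(2) by (simp add: ent eq_neg_iff_add_eq_0 add.commute)
  show ?thesis
    by (rule mat2_eqI) (simp_all add: ent x y field_simps)
qed

theorem lemma4p1: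
  fixes X Y :: "complex^2^2"
  assumes "trace X = 0" and "trace Y = 0"
  defines "DX \<equiv> det X" and "DY \<equiv> det Y" and "T \<equiv> trace (X ** Y) / 2"
  defines "\<delta> \<equiv> (\<lambda>t::real. 1 + 2 * of_real t * (1 - of_real t) *
              (Sin DX * Sin DY * T + Cos DX * Cos DY - 1))"
  defines "C \<equiv> msc (Cos DY * Sin DX) X + msc (Cos DX * Sin DY) Y
              + msc (Sin DX * Sin DY / 2) (X ** Y - Y ** X)"
  shows "(\<forall>t::real. det (msc (of_real (1 - t)) (mat 1) + msc (of_real t) (mexp X ** mexp Y)) = \<delta> t)
    \<and> ((\<forall>c. is_eigenvalue (mexp X ** mexp Y) c \<longrightarrow> c \<notin> complex_of_real ` {..0})
        \<longrightarrow> mlog (mexp X ** mexp Y) = msc (AC (Cos DX * Cos DY + Sin DX * Sin DY * T)) C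
          \<and> mlog (mexp X ** mexp Y) = msc (integral {0..1::real} (\<lambda>t. 1 / \<delta> t)) C)"
proof -
  define a where "a = Cos DX * Cos DY + Sin DX * Sin DY * T"
  let ?M = "mexp X ** mexp Y"
  have eX: "mexp X = msc (Cos DX) (mat 1) + msc (Sin DX) X" unfolding DX_def by (rule mexp_traceless[OF assms(1)])
  have eY: "mexp Y = msc (Cos DY) (mat 1) + msc (Sin DY) Y" unfolding DY_def by (rule mexp_traceless[OF assms(2)])
  have MC: "?M = msc a (mat 1) + C"
    unfolding eX eY a_def T_def C_def by (rule prod_form[OF assms(1,2)])
  have dM: "det ?M = 1" by (simp add: det_mul det_mexp_traceless assms(1,2))
  have trC: "trace C = 0"
  proof -
    have "trace (X ** Y - Y ** X) = 0" unfolding trace_sub trace_mul_sym[of X Y] by simp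
    then show ?thesis unfolding C_def trace_add trace_msc using assms(1,2) by simp
  qed
  have tM: "trace ?M = 2 * a" unfolding MC trace_add trace_msc using trC by (simp add: ent)
  have da: "\<delta> t = 1 + 2 * of_real t * (1 - of_real t) * (a - 1)" for t
    unfolding \<delta>_def a_def by (simp only: add.commute[of "Sin DX * Sin DY * T"])
  have partA: "\<forall>t::real. det (msc (of_real (1 - t)) (mat 1) + msc (of_real t) ?M) = \<delta> t"
  proof
    fix t :: real
    show "det (msc (of_real (1 - t)) (mat 1) + msc (of_real t) ?M) = \<delta> t"
      unfolding da by (rule det_conv[OF dM tM])
  qed
  have partB: "mlog ?M = msc (AC (Cos DX * Cos DY + Sin DX * Sin DY * T)) C
          \<and> mlog ?M = msc (integral {0..1::real} (\<lambda>t. 1 / \<delta> t)) C"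
    if H: "\<forall>c. is_eigenvalue ?M c \<longrightarrow> c \<notin> complex_of_real ` {..0}"
  proof -
    have eig: "\<forall>c. is_eigenvalue ?M c \<longrightarrow> c \<notin> \<real>\<^sub>\<le>\<^sub>0"
    proof (intro allI impI notI)
      fix c assume "is_eigenvalue ?M c" "c \<in> \<real>\<^sub>\<le>\<^sub>0"
      from \<open>c \<in> \<real>\<^sub>\<le>\<^sub>0\<close> have r: "Re c \<le> 0" "Im c = 0" by (simp_all add: complex_nonpos_Reals_iff)
      then have "c = complex_of_real (Re c)" by (simp add: complex_eq_iff)
      then have "c \<in> complex_of_real ` {..0}" using r(1) by (metis atMost_iff image_eqI)
      then show False using H \<open>is_eigenvalue ?M c\<close> by blast
    qed
    have MaC: "?M - msc a (mat 1) = C" unfolding MC by (rule mat2_eqI) simp_all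
    have L: "mlog ?M = msc (AC a) C"
      using mlog_char[OF dM tM eig] unfolding MaC .
    have I: "integral {0..1::real} (\<lambda>t. 1 / \<delta> t) = AC a"
      unfolding AC_def by (simp only: da)
    show ?thesis using L I unfolding a_def by (simp only:)
  qed
  show ?thesis using partA partB by blast
qed

end
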